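(* Let $M\in\mathbb R^{n\times n}$ be sufficient and let the affine subspace $S=\{q+Q\theta:\theta\in\mathbb R^d\}$ lie in general position. Then for any two distinct complementary bases $B_1,B_2$, the relative interiors of the critical domains $S_{B_1}$ and $S_{B_2}$ are disjoint.
   Context: Let $M\in\mathbb R^{n\times n}$ and $A=[\,I\;\;-M\,]\in\mathbb R^{n\times 2n}$, columns indexed by $\{1,\dots,2n\}$; $A_{\cdot J}$ is the submatrix of columns indexed by $J$. Complementary index: $\bar i=i+n$ if $i\le n$, $\bar i=i-n$ if $i>n$. A set $J$ is complementary if $i\in J\Rightarrow\bar i\notin J$. A complementary basis is a complementary set $B$ with $|B|=n$ and $A_{\cdot B}$ invertible. Complementary cone: $\mathcal C(J)=\{A_{\cdot J}\lambda:\lambda\ge0\}$. Let $Q\in\mathbb R^{n\times d}$ have rank $d$, $q\in\mathbb R^n$, and $S=\{q+Q\theta:\theta\in\mathbb R^d\}$. The critical domain of a complementary basis $B$ is $S_B=\mathcal C(B)\cap S$. $S$ lies in general position if for every complementary basis $B$: $S\cap\mathcal C(B)\neq\emptyset$ implies $S\cap\operatorname{int}\mathcal C(B)\neq\emptyset$. $M$ is column sufficient if $[z_i(Mz)_i\le 0\ \forall i]\Rightarrow[z_i(Mz)_i=0\ \forall i]$; row sufficient if $M^T$ is column sufficient; sufficient if both. *)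

theory Defs
  imports "HOL-Analysis.Analysis"
begin

text \<open>Columns of A = [I, -M] are indexed by the disjoint sum 'n + 'n:
  Inl i is column i (i <= n), Inr i is column i + n.\<close>

definition Acol :: "real^'n^'n \<Rightarrow> ('n + 'n) \<Rightarrow> real^'n" where
  "Acol M j = (case j of Inl i \<Rightarrow> axis i 1 | Inr i \<Rightarrow> - column i M)"

definition compl_idx :: "('n + 'n) \<Rightarrow> ('n + 'n)" where
  "compl_idx j = (case j of Inl i \<Rightarrow> Inr i | Inr i \<Rightarrow> Inl i)"

definition complementary :: "('n + 'n) set \<Rightarrow> bool" where
  "complementary J \<longleftrightarrow> (\<forall>i\<in>J. compl_idx i \<notin> J)"

definition sub_invertible :: "real^'n^'n \<Rightarrow> ('n + 'n) set \<Rightarrow> bool" where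
  "sub_invertible M B \<longleftrightarrow> card B = CARD('n) \<and>
     (\<forall>c :: ('n + 'n) \<Rightarrow> real. (\<Sum>j\<in>B. c j *\<^sub>R Acol M j) = 0 \<longrightarrow> (\<forall>j\<in>B. c j = 0))"

definition compl_basis :: "real^'n^'n \<Rightarrow> ('n + 'n) set \<Rightarrow> bool" where
  "compl_basis M B \<longleftrightarrow> complementary B \<and> sub_invertible M B"

definition compl_cone :: "real^'n^'n \<Rightarrow> ('n + 'n) set \<Rightarrow> (real^'n) set" where
  "compl_cone M J = {(\<Sum>j\<in>J. c j *\<^sub>R Acol M j) | c. \<forall>j\<in>J. c j \<ge> 0}"

definition param_space :: "real^'n \<Rightarrow> real^'d^'n \<Rightarrow> (real^'n) set" where
  "param_space q Q = {q + Q *v \<theta> | \<theta>. True}"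

definition critical_domain :: "real^'n^'n \<Rightarrow> real^'n \<Rightarrow> real^'d^'n \<Rightarrow> ('n + 'n) set \<Rightarrow> (real^'n) set" where
  "critical_domain M q Q B = compl_cone M B \<inter> param_space q Q"

definition general_position :: "real^'n^'n \<Rightarrow> real^'n \<Rightarrow> real^'d^'n \<Rightarrow> bool" where
  "general_position M q Q \<longleftrightarrow> (\<forall>B. compl_basis M B \<longrightarrow>
      param_space q Q \<inter> compl_cone M B \<noteq> {} \<longrightarrow>
      param_space q Q \<inter> interior (compl_cone M B) \<noteq> {})"

definition column_sufficient :: "real^'n^'n \<Rightarrow> bool" where
  "column_sufficient M \<longleftrightarrow> (\<forall>z. (\<forall>i. z $ i * (M *v z) $ i \<le> 0) \<longrightarrow> (\<forall>i. z $ i * (M *v z) $ i = 0))"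

definition row_sufficient :: "real^'n^'n \<Rightarrow> bool" where
  "row_sufficient M \<longleftrightarrow> column_sufficient (transpose M)"

definition sufficient :: "real^'n^'n \<Rightarrow> bool" where
  "sufficient M \<longleftrightarrow> column_sufficient M \<and> row_sufficient M"

end

theory Submission
  imports Defs
begin

lemma affine_param:
  fixes Q :: "real^'d^'n" and q :: "real^'n"
  shows "affine (param_space q Q)"
proof (unfold affine_def, intro ballI allI impI)
  fix x y :: "real^'n" and u v :: real
  assume x: "x \<in> param_space q Q" and y: "y \<in> param_space q Q" and uv: "u + v = 1"
  obtain a where a: "x = q + Q *v a" using x unfolding param_space_def by blast
  obtain b where b: "y = q + Q *v b" using y unfolding param_space_def by blast
  have "u *\<^sub>R (q + Q *v a) + v *\<^sub>R (q + Q *v b) = (u + v) *\<^sub>R q + (u *\<^sub>R (Q *v a) + v *\<^sub>R (Q *v b))"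
    by (simp add: algebra_simps)
  also have "\<dots> = q + Q *v (u *\<^sub>R a + v *\<^sub>R b)"
    using uv by (simp add: matrix_vector_right_distrib matrix_vector_mult_scaleR)
  finally show "u *\<^sub>R x + v *\<^sub>R y \<in> param_space q Q"
    unfolding param_space_def a b by blast
qed

lemma convex_cone:
  fixes M :: "real^'n^'n" and B :: "('n+'n) set"
  shows "convex (compl_cone M B)"
  unfolding convex_def compl_cone_def
proof (clarify)
  fix u v :: real and c d :: "('n+'n) \<Rightarrow> real"
  assume h: "0 \<le> u" "0 \<le> v" "u + v = 1" "\<forall>j\<in>B. 0 \<le> c j" "\<forall>j\<in>B. 0 \<le> d j"
  have "u *\<^sub>R (\<Sum>j\<in>B. c j *\<^sub>R Acol M j) + v *\<^sub>R (\<Sum>j\<in>B. d j *\<^sub>R Acol M j)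
      = (\<Sum>j\<in>B. (u * c j + v * d j) *\<^sub>R Acol M j)"
    by (simp add: scaleR_sum_right sum.distrib[symmetric] scaleR_add_left)
  moreover have "\<forall>j\<in>B. 0 \<le> u * c j + v * d j" using h by simp
  ultimately show "\<exists>e. u *\<^sub>R (\<Sum>j\<in>B. c j *\<^sub>R Acol M j) + v *\<^sub>R (\<Sum>j\<in>B. d j *\<^sub>R Acol M j)
      = (\<Sum>j\<in>B. e j *\<^sub>R Acol M j) \<and> (\<forall>j\<in>B. 0 \<le> e j)"
    by (intro exI[of _ "\<lambda>j. u * c j + v * d j"]) simp
qed

lemma relint_sub:
  fixes M :: "real^'n^'n" and Q :: "real^'d^'n" and q :: "real^'n" and B :: "('n+'n) set"
  assumes "general_position M q Q" "compl_basis M B"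
  shows "rel_interior (critical_domain M q Q B) \<subseteq> interior (compl_cone M B)"
proof (cases "param_space q Q \<inter> compl_cone M B = {}")
  case True
  then show ?thesis unfolding critical_domain_def using rel_interior_subset by blast
next
  case False
  then obtain x where x: "x \<in> param_space q Q" "x \<in> interior (compl_cone M B)"
    using assms unfolding general_position_def by blast
  have ri: "rel_interior (compl_cone M B) = interior (compl_cone M B)"
    using x(2) rel_interior_nonempty_interior by blast
  have ra: "rel_interior (param_space q Q) = param_space q Q"
    by (rule rel_interior_affine[OF affine_param])
  have "rel_interior (critical_domain M q Q B) = rel_interior (compl_cone M B) \<inter> rel_interior (param_space q Q)"
    unfolding critical_domain_def
    by (rule convex_rel_interior_inter_two[OF convex_cone affine_imp_convex[OF affine_param]])
       (use x ri ra in blast)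
  then show ?thesis using ri by blast
qed

lemma interior_pos:
  fixes M :: "real^'n^'n" and B :: "('n+'n) set"
  assumes "x \<in> interior (compl_cone M B)"
  shows "\<exists>c. x = (\<Sum>j\<in>B. c j *\<^sub>R Acol M j) \<and> (\<forall>j\<in>B. c j > 0)"
proof -
  obtain e where e: "e > 0" "ball x e \<subseteq> compl_cone M B"
    using assms mem_interior by blast
  define v where "v = (\<Sum>j\<in>B. Acol M j)"
  define t where "t = e / (2 * (norm v + 1))"
  have pos: "2 * (norm v + 1) > 0" by (smt (verit) norm_ge_zero)
  have t: "t > 0" unfolding t_def using e pos by simp
  have "norm (t *\<^sub>R v) < e"
  proof -
    have "norm (t *\<^sub>R v) = t * norm v" using t by simp
    also have "\<dots> < t * (norm v + 1) * 2" proof -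
      have "t * norm v \<ge> 0" using t by simp
      moreover have "t * (norm v + 1) * 2 = 2 * (t * norm v) + 2 * t" by (simp add: algebra_simps)
      ultimately show ?thesis using t by linarith
    qed
    also have "\<dots> = e" unfolding t_def using pos by (simp add: field_simps)
    finally show ?thesis .
  qed
  then have "x - t *\<^sub>R v \<in> ball x e" by (simp add: dist_norm)
  then have "x - t *\<^sub>R v \<in> compl_cone M B" using e by blast
  then obtain c where c: "x - t *\<^sub>R v = (\<Sum>j\<in>B. c j *\<^sub>R Acol M j)" "\<forall>j\<in>B. c j \<ge> 0"
    unfolding compl_cone_def by blast
  have "x = (\<Sum>j\<in>B. c j *\<^sub>R Acol M j) + t *\<^sub>R v" using c(1) by (simp add: algebra_simps)
  also have "\<dots> = (\<Sum>j\<in>B. (c j + t) *\<^sub>R Acol M j)"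
    unfolding v_def by (simp add: scaleR_sum_right sum.distrib scaleR_add_left)
  finally show ?thesis using c(2) t by (intro exI[of _ "\<lambda>j. c j + t"]) auto
qed

lemma sum_axis: "(\<Sum>i\<in>UNIV. a i *\<^sub>R (axis i (1::real) :: real^'n)) = (\<chi> i. a i)"
proof (subst vec_eq_iff, intro allI)
  fix k :: 'n
  have "(\<Sum>x\<in>UNIV. a x * (if k = x then 1 else 0)) = (\<Sum>x\<in>UNIV. if k = x then a x else 0)"
    by (rule sum.cong) auto
  then show "(\<Sum>i\<in>UNIV. a i *\<^sub>R (axis i (1::real) :: real^'n)) $ k = (\<chi> i. a i) $ k" by (simp add: axis_def)
qed

lemma sum_decomp:
  fixes M :: "real^'n^'n" and B :: "('n+'n) set"
  shows "(\<Sum>j\<in>B. c j *\<^sub>R Acol M j) =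
    (\<chi> i. if Inl i \<in> B then c (Inl i) else 0) - M *v (\<chi> i. if Inr i \<in> B then c (Inr i) else 0)"
proof -
  let ?g = "\<lambda>j. (if j \<in> B then c j else 0) *\<^sub>R Acol M j"
  have "(\<Sum>j\<in>B. c j *\<^sub>R Acol M j) = (\<Sum>j\<in>UNIV. ?g j)"
    by (rule sum.mono_neutral_cong_left) auto
  also have "\<dots> = (\<Sum>j\<in>UNIV <+> UNIV. ?g j)" by simp
  also have "\<dots> = (\<Sum>i\<in>UNIV. ?g (Inl i)) + (\<Sum>i\<in>UNIV. ?g (Inr i))"
    by (subst sum.Plus) auto
  also have "(\<Sum>i\<in>UNIV. ?g (Inl i)) = (\<chi> i. if Inl i \<in> B then c (Inl i) else 0)"
    unfolding Acol_def by (simp add: sum_axis)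
  also have "(\<Sum>i\<in>UNIV. ?g (Inr i)) = - (M *v (\<chi> i. if Inr i \<in> B then c (Inr i) else 0))"
    by (simp add: Acol_def matrix_mult_sum sum_negf[symmetric] scalar_mult_eq_scaleR)
  finally show ?thesis by simp
qed

lemma basis_one:
  fixes M :: "real^'n^'n" and B :: "('n+'n) set"
  assumes "compl_basis M B"
  shows "Inl i \<in> B \<longleftrightarrow> Inr i \<notin> B"
proof -
  have cB: "complementary B" and card: "card B = CARD('n)"
    using assms unfolding compl_basis_def sub_invertible_def by auto
  define f where "f = (\<lambda>j::'n+'n. case j of Inl i \<Rightarrow> i | Inr i \<Rightarrow> i)"
  have inj: "inj_on f B"
  proof (rule inj_onI)
    fix a b assume ab: "a \<in> B" "b \<in> B" "f a = f b"
    show "a = b"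
      using ab cB unfolding complementary_def compl_idx_def f_def
      by (cases a; cases b) force+
  qed
  have "card (f ` B) = CARD('n)" using card_image[OF inj] card by simp
  then have "f ` B = UNIV" by (simp add: card_subset_eq)
  then obtain j where "j \<in> B" "f j = i" by (metis UNIV_I imageE)
  then have "Inl i \<in> B \<or> Inr i \<in> B" unfolding f_def by (cases j) auto
  moreover have "\<not> (Inl i \<in> B \<and> Inr i \<in> B)"
    using cB unfolding complementary_def compl_idx_def by force
  ultimately show ?thesis by blast
qed

theorem mainTheorem5:
  fixes M :: "real^'n^'n" and Q :: "real^'d^'n" and q :: "real^'n"
    and B1 B2 :: "('n + 'n) set"
  assumes "sufficient M"
    and "rank Q = CARD('d)"
    and "general_position M q Q"
    and "compl_basis M B1" and "compl_basis M B2" and "B1 \<noteq> B2"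
  shows "rel_interior (critical_domain M q Q B1) \<inter> rel_interior (critical_domain M q Q B2) = {}"
proof (rule ccontr)
  assume "rel_interior (critical_domain M q Q B1) \<inter> rel_interior (critical_domain M q Q B2) \<noteq> {}"
  then obtain x where xi: "x \<in> interior (compl_cone M B1)" "x \<in> interior (compl_cone M B2)"
    using relint_sub[OF assms(3) assms(4)] relint_sub[OF assms(3) assms(5)] by blast
  obtain c1 where c1: "x = (\<Sum>j\<in>B1. c1 j *\<^sub>R Acol M j)" "\<forall>j\<in>B1. c1 j > 0"
    using interior_pos[OF xi(1)] by blast
  obtain c2 where c2: "x = (\<Sum>j\<in>B2. c2 j *\<^sub>R Acol M j)" "\<forall>j\<in>B2. c2 j > 0"
    using interior_pos[OF xi(2)] by blast
  define w1 where "w1 = (\<chi> i. if Inl i \<in> B1 then c1 (Inl i) else 0)"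
  define z1 where "z1 = (\<chi> i. if Inr i \<in> B1 then c1 (Inr i) else 0)"
  define w2 where "w2 = (\<chi> i. if Inl i \<in> B2 then c2 (Inl i) else 0)"
  define z2 where "z2 = (\<chi> i. if Inr i \<in> B2 then c2 (Inr i) else 0)"
  have x1: "x = w1 - M *v z1" using c1(1) unfolding w1_def z1_def by (simp only: sum_decomp)
  have x2: "x = w2 - M *v z2" using c2(1) unfolding w2_def z2_def by (simp only: sum_decomp)
  have Md: "M *v (z1 - z2) = w1 - w2" using x1 x2
    by (simp add: matrix_vector_mult_diff_distrib algebra_simps)
  have o1: "w1 $ i * z1 $ i = 0" for i unfolding w1_def z1_def using basis_one[OF assms(4), of i] by simp
  have o2: "w2 $ i * z2 $ i = 0" for i unfolding w2_def z2_def using basis_one[OF assms(5), of i] by simp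
  have n: "\<And>i. w1 $ i \<ge> 0 \<and> z1 $ i \<ge> 0 \<and> w2 $ i \<ge> 0 \<and> z2 $ i \<ge> 0"
    unfolding w1_def z1_def w2_def z2_def using c1(2) c2(2) by (simp add: less_imp_le)
  have le: "\<forall>i. (z1 - z2) $ i * (M *v (z1 - z2)) $ i \<le> 0"
  proof
    fix i
    have "(z1 - z2) $ i * (M *v (z1 - z2)) $ i = - (z1 $ i * w2 $ i + z2 $ i * w1 $ i)"
    proof -
      have "(z1 - z2) $ i * (M *v (z1 - z2)) $ i = w1 $ i * z1 $ i + w2 $ i * z2 $ i - (z1 $ i * w2 $ i + z2 $ i * w1 $ i)"
        unfolding Md by (simp add: algebra_simps)
      then show ?thesis using o1[of i] o2[of i] by linarith
    qed
    also have "\<dots> \<le> 0" using n[of i] mult_nonneg_nonneg[of "z1 $ i" "w2 $ i"] mult_nonneg_nonneg[of "z2 $ i" "w1 $ i"] by linarith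
    finally show "(z1 - z2) $ i * (M *v (z1 - z2)) $ i \<le> 0" .
  qed
  have cs: "column_sufficient M" using assms(1) unfolding sufficient_def by simp
  have eq: "\<And>i. z1 $ i * w2 $ i + z2 $ i * w1 $ i = 0"
  proof -
    fix i
    have "(z1 - z2) $ i * (M *v (z1 - z2)) $ i = 0" using cs le unfolding column_sufficient_def by blast
    moreover have "(z1 - z2) $ i * (M *v (z1 - z2)) $ i = - (z1 $ i * w2 $ i + z2 $ i * w1 $ i)"
    proof -
      have "(z1 - z2) $ i * (M *v (z1 - z2)) $ i = w1 $ i * z1 $ i + w2 $ i * z2 $ i - (z1 $ i * w2 $ i + z2 $ i * w1 $ i)"
        unfolding Md by (simp add: algebra_simps)
      then show ?thesis using o1[of i] o2[of i] by linarith
    qed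
    ultimately show "z1 $ i * w2 $ i + z2 $ i * w1 $ i = 0" by linarith
  qed
  have z: "\<And>i. z1 $ i * w2 $ i = 0 \<and> z2 $ i * w1 $ i = 0"
  proof -
    fix i
    have "z1 $ i * w2 $ i \<ge> 0" "z2 $ i * w1 $ i \<ge> 0" using n[of i] by simp_all
    then show "z1 $ i * w2 $ i = 0 \<and> z2 $ i * w1 $ i = 0" using eq[of i] by linarith
  qed
  have L: "\<And>i. Inl i \<in> B1 \<longleftrightarrow> Inl i \<in> B2"
  proof -
    fix i
    show "Inl i \<in> B1 \<longleftrightarrow> Inl i \<in> B2"
    proof (rule ccontr)
      assume "\<not> ?thesis"
      then consider "Inl i \<in> B1" "Inr i \<in> B2" | "Inr i \<in> B1" "Inl i \<in> B2"
        using basis_one[OF assms(4)] basis_one[OF assms(5)] by blast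
      then show False
      proof cases
        case 1
        then have "w1 $ i > 0" "z2 $ i > 0" unfolding w1_def z2_def using c1(2) c2(2) by auto
        then show False using z[of i] by simp
      next
        case 2
        then have "z1 $ i > 0" "w2 $ i > 0" unfolding z1_def w2_def using c1(2) c2(2) by auto
        then show False using z[of i] by simp
      qed
    qed
  qed
  have "B1 = B2"
  proof (rule set_eqI)
    fix j show "j \<in> B1 \<longleftrightarrow> j \<in> B2"
      using L basis_one[OF assms(4)] basis_one[OF assms(5)] by (cases j) auto
  qed
  then show False using assms(6) by simp
qed

end
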